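(* Let $n$, $k$, $t$, $\ell$, $i$, $j$ be positive integers with $i\leq\min\{t,j\}$, $2t-i\leq k$, $t+j-i\leq\ell$ and $n\geq 2k$, and let $V$ be an $n$-dimensional vector space over $\mathbb{F}_q$. Suppose $\mathcal{F}\subseteq{V\brack k}$ is an almost $t$-intersecting family with $2t-i\leq\tau_t(\mathcal{F})\leq k$. If $X_1,X_2\in{V\brack \ell}$ with $\dim(X_1\cap X_2)=j$, then $$\frac{|\mathcal{F}(X_1,X_2;t,i)|}{q^{2(j-i)(t-i)}{j\brack i}{\ell-j\brack t-i}^{2}}\leq{k-t+1\brack 1}^{\tau_t(\mathcal{F})+i-2t}{n-\tau_t(\mathcal{F})\brack k-\tau_t(\mathcal{F})}+\sum_{m=0}^{\tau_t(\mathcal{F})+i-2t-1}{k-t+1\brack 1}^{m}.$$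
   Context: $q$ is a prime power; ${W\brack k}$ is the set of $k$-dimensional subspaces of $W$ and ${m\brack r}$ the Gaussian binomial coefficient $\prod_{s=0}^{r-1}\frac{q^{m-s}-1}{q^{r-s}-1}$ (equal to $1$ for $r=0$). A family $\mathcal{F}\subseteq{V\brack k}$ is almost $t$-intersecting if for each $F\in\mathcal{F}$ there is at most one $F'\in\mathcal{F}$ with $\dim(F\cap F')<t$. A subspace $W$ is a $t$-cover of $\mathcal{F}$ if $\dim(W\cap F)\geq t$ for all $F\in\mathcal{F}$; $\tau_t(\mathcal{F})$ is the minimum dimension of a $t$-cover. For subspaces $A,B$ of $V$, $\mathcal{F}(A,B;t,i)=\{F\in\mathcal{F}: \dim(F\cap A)\geq t,\ \dim(F\cap B)\geq t,\ \dim(F\cap A\cap B)=i\}$. *)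

theory Defs
  imports "HOL-Analysis.Analysis"
begin

text \<open>Ambient space: V = 'a^'n over a finite field 'a (so q = CARD('a)), dim V = CARD('n).\<close>

definition gauss_binom :: "nat \<Rightarrow> nat \<Rightarrow> nat \<Rightarrow> real" where
  "gauss_binom q m r = (\<Prod>s<r. (real q ^ (m - s) - 1) / (real q ^ (r - s) - 1))"

definition subspaces_dim :: "nat \<Rightarrow> ('a::field ^ 'n) set set" where
  "subspaces_dim k = {W. vec.subspace W \<and> vec.dim W = k}"

definition almost_t_intersecting :: "nat \<Rightarrow> ('a::field ^ 'n) set set \<Rightarrow> bool" where
  "almost_t_intersecting t \<F> \<longleftrightarrow>
     (\<forall>F\<in>\<F>. card {F'\<in>\<F>. vec.dim (F \<inter> F') < t} \<le> 1)"

definition is_t_cover :: "nat \<Rightarrow> ('a::field ^ 'n) set set \<Rightarrow> ('a ^ 'n) set \<Rightarrow> bool" where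
  "is_t_cover t \<F> W \<longleftrightarrow> vec.subspace W \<and> (\<forall>F\<in>\<F>. vec.dim (W \<inter> F) \<ge> t)"

definition tau :: "nat \<Rightarrow> ('a::field ^ 'n) set set \<Rightarrow> nat" where
  "tau t \<F> = (LEAST d. \<exists>W. is_t_cover t \<F> W \<and> vec.dim W = d)"

definition restr_family ::
  "('a::field ^ 'n) set set \<Rightarrow> ('a ^ 'n) set \<Rightarrow> ('a ^ 'n) set \<Rightarrow> nat \<Rightarrow> nat \<Rightarrow> ('a ^ 'n) set set" where
  "restr_family \<F> A B t i = {F\<in>\<F>. vec.dim (F \<inter> A) \<ge> t \<and> vec.dim (F \<inter> B) \<ge> t
                                   \<and> vec.dim (F \<inter> A \<inter> B) = i}"

end

theory Submission
  imports Defs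
begin

lemma card_span_insert:
  fixes S :: "('a::{field,finite}^'n) set"
  assumes "v \<notin> vec.span S"
  shows "card (vec.span (insert v S)) = CARD('a) * card (vec.span S)"
proof -
  have eq: "vec.span (insert v S) = (\<lambda>(c,y). c *s v + y) ` (UNIV \<times> vec.span S)"
    unfolding vec.span_insert
  proof (safe, goal_cases)
    case (1 x k) then show ?case by (intro image_eqI[of _ _ "(k, x - k *s v)"]) auto
  next
    case (2 x c y) then show ?case by (intro exI[of _ c]) auto
  qed
  have inj: "inj_on (\<lambda>(c,y). c *s v + y) (UNIV \<times> vec.span S)"
  proof (rule inj_onI, clarify)
    fix c y c' y' assume y: "y \<in> vec.span S" "y' \<in> vec.span S" and e: "c *s v + y = c' *s v + y'"
    show "c = c' \<and> y = y'"
    proof (cases "c = c'")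
      case True then show ?thesis using e by simp
    next
      case False
      have h: "(c - c') *s v = y' - y" using e by (simp add: algebra_simps)
      have "inverse (c - c') *s ((c - c') *s v) = inverse (c - c') *s (y' - y)"
        by (rule arg_cong[OF h])
      hence "v = inverse (c - c') *s (y' - y)" using False by (simp only: vector_smult_assoc) simp
      hence "v \<in> vec.span S" using y by (simp add: vec.span_scale vec.span_diff)
      thus ?thesis using assms by blast
    qed
  qed
  show ?thesis unfolding eq card_image[OF inj] card_cartesian_product by simp
qed

lemma card_span_indep:
  fixes B :: "('a::{field,finite}^'n) set"
  assumes "vec.independent B"
  shows "card (vec.span B) = CARD('a) ^ card B"
proof -
  have "finite B" using assms vec.finiteI_independent by blast
  thus ?thesis using assms
  proof (induction B rule: finite_induct)
    case empty then show ?case by simp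
  next
    case (insert v B)
    have "vec.independent B" "v \<notin> vec.span B" using insert.prems insert.hyps(2)
      by (auto simp: vec.independent_insert)
    then show ?case using insert card_span_insert[of v B] by simp
  qed
qed

lemma card_subspace:
  fixes W :: "('a::{field,finite}^'n) set"
  assumes "vec.subspace W"
  shows "card W = CARD('a) ^ vec.dim W"
proof -
  obtain B where B: "B \<subseteq> W" "vec.independent B" "W \<subseteq> vec.span B" "card B = vec.dim W"
    using vec.basis_exists by blast
  have "vec.span B = W" using vec.span_subspace[OF B(1) B(3) assms] .
  thus ?thesis using card_span_indep[OF B(2)] B(4) by simp
qed

lemma card_field_ge2: "CARD('a::{field,finite}) \<ge> 2"
proof -
  have "card {0::'a, 1} \<le> CARD('a)" by (rule card_mono) auto
  thus ?thesis by simp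
qed

fun seqs :: "('a::field^'n) set \<Rightarrow> ('a^'n) set \<Rightarrow> nat \<Rightarrow> ('a^'n) list set" where
  "seqs U Z 0 = {[]}"
| "seqs U Z (Suc r) = {v # us | v us. us \<in> seqs U Z r \<and> v \<in> U \<and> v \<notin> vec.span (Z \<union> set us)}"

lemma seqs_props:
  fixes U Z :: "('a::field^'n) set"
  assumes "us \<in> seqs U Z r"
  shows "set us \<subseteq> U \<and> length us = r \<and> vec.dim (Z \<union> set us) = vec.dim Z + r"
  using assms
proof (induction r arbitrary: us)
  case 0 then show ?case by simp
next
  case (Suc r)
  then obtain v vs where us: "us = v # vs" "vs \<in> seqs U Z r" "v \<in> U" "v \<notin> vec.span (Z \<union> set vs)"
    by auto
  have "Z \<union> set us = insert v (Z \<union> set vs)" using us by auto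
  then show ?case using Suc.IH[OF us(2)] us vec.dim_insert[of v "Z \<union> set vs"] by auto
qed

lemma card_seqs:
  fixes U Z :: "('a::{field,finite}^'n) set"
  assumes U: "vec.subspace U" and Z: "vec.subspace Z" "Z \<subseteq> U"
    and r: "vec.dim Z + r \<le> vec.dim U"
  shows "real (card (seqs U Z r)) = (\<Prod>s<r. real CARD('a) ^ vec.dim U - real CARD('a) ^ (vec.dim Z + s))"
  using r
proof (induction r)
  case 0 then show ?case by simp
next
  case (Suc r)
  define q where "q = CARD('a)"
  have q1: "1 \<le> q" using card_field_ge2[where 'a='a] unfolding q_def by simp
  have eq: "seqs U Z (Suc r) = (\<lambda>(us,v). v # us) ` (SIGMA us: seqs U Z r. U - vec.span (Z \<union> set us))"
    by auto
  have inj: "inj_on (\<lambda>(us,v). v # us) (SIGMA us: seqs U Z r. U - vec.span (Z \<union> set us))"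
    by (auto simp: inj_on_def)
  have fin: "finite (seqs U Z r)"
  proof -
    have "seqs U Z r \<subseteq> {xs. set xs \<subseteq> UNIV \<and> length xs = r}" using seqs_props by blast
    moreover have "finite {xs. set xs \<subseteq> (UNIV::('a^'n) set) \<and> length xs = r}"
      by (rule finite_lists_length_eq) simp
    ultimately show ?thesis by (rule finite_subset)
  qed
  have each: "card (U - vec.span (Z \<union> set us)) = q ^ vec.dim U - q ^ (vec.dim Z + r)"
    if us: "us \<in> seqs U Z r" for us
  proof -
    have p: "set us \<subseteq> U" "vec.dim (Z \<union> set us) = vec.dim Z + r" using seqs_props[OF us] by auto
    have sub: "vec.span (Z \<union> set us) \<subseteq> U" using p Z U by (intro vec.span_minimal) auto
    hence sub: "vec.span (Z \<union> set us) \<subseteq> U" .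
    have "card (U - vec.span (Z \<union> set us)) = card U - card (vec.span (Z \<union> set us))"
      by (rule card_Diff_subset) (use sub in auto)
    also have "\<dots> = q ^ vec.dim U - q ^ (vec.dim Z + r)"
      using card_subspace[OF U] card_subspace[of "vec.span (Z \<union> set us)"] p unfolding q_def
      by (simp add: vec.dim_span)
    finally show ?thesis .
  qed
  have "card (seqs U Z (Suc r)) = card (SIGMA us: seqs U Z r. U - vec.span (Z \<union> set us))"
    unfolding eq by (rule card_image[OF inj])
  also have "\<dots> = (\<Sum>us\<in>seqs U Z r. card (U - vec.span (Z \<union> set us)))"
    by (rule card_SigmaI[OF fin]) auto
  also have "\<dots> = card (seqs U Z r) * (q ^ vec.dim U - q ^ (vec.dim Z + r))"
    using each by simp
  finally have c: "card (seqs U Z (Suc r)) = card (seqs U Z r) * (q ^ vec.dim U - q ^ (vec.dim Z + r))" .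
  have le: "q ^ (vec.dim Z + r) \<le> q ^ vec.dim U" using Suc.prems q1 by (intro power_increasing) auto
  have "real (card (seqs U Z (Suc r))) = real (card (seqs U Z r)) * (real q ^ vec.dim U - real q ^ (vec.dim Z + r))"
    unfolding c using le by (simp add: of_nat_diff)
  then show ?case using Suc by (simp add: q_def)
qed

lemma finite_seqs: "finite (seqs (U::('a::{field,finite}^'n) set) Z r)"
proof -
  have "seqs U Z r \<subseteq> {xs. set xs \<subseteq> UNIV \<and> length xs = r}" using seqs_props by blast
  moreover have "finite {xs. set xs \<subseteq> (UNIV::('a^'n) set) \<and> length xs = r}"
    by (rule finite_lists_length_eq) simp
  ultimately show ?thesis by (rule finite_subset)
qed

definition Sub :: "('a::field^'n) set \<Rightarrow> ('a^'n) set \<Rightarrow> ('a^'n) set \<Rightarrow> nat \<Rightarrow> ('a^'n) set set" where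
  "Sub U Z I d = {A. vec.subspace A \<and> I \<subseteq> A \<and> A \<subseteq> U \<and> A \<inter> Z = I \<and> vec.dim A = d}"

lemma seqs_mono:
  fixes A U Z I :: "('a::field^'n) set"
  assumes "vec.subspace A" "vec.subspace I" "vec.subspace Z" "I \<subseteq> A" "A \<subseteq> U" "A \<inter> Z = I"
  shows "seqs A I r \<subseteq> seqs U Z r"
proof (induction r)
  case 0 then show ?case by simp
next
  case (Suc r)
  show ?case
  proof
    fix xs assume "xs \<in> seqs A I (Suc r)"
    then obtain v us where xs: "xs = v # us" "us \<in> seqs A I r" "v \<in> A" "v \<notin> vec.span (I \<union> set us)"
      by auto
    have usA: "set us \<subseteq> A" using seqs_props[OF xs(2)] by auto
    have spA: "vec.span (set us) \<subseteq> A" using usA assms(1) by (intro vec.span_minimal)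
    have "v \<notin> vec.span (Z \<union> set us)"
    proof
      assume "v \<in> vec.span (Z \<union> set us)"
      then obtain x y where xy: "v = x + y" "x \<in> vec.span Z" "y \<in> vec.span (set us)"
        unfolding vec.span_Un by blast
      have "x \<in> Z" using xy(2) assms(3) by (metis vec.span_eq_iff)
      moreover have "x \<in> A" using xy spA \<open>v \<in> A\<close> assms(1)
        by (metis add_diff_cancel_right' in_mono vec.subspace_diff)
      ultimately have "x \<in> I" using assms(6) by blast
      hence "v \<in> vec.span (I \<union> set us)" unfolding vec.span_Un using xy
        by (auto intro: vec.span_base)
      thus False using xs(4) by blast
    qed
    thus "xs \<in> seqs U Z (Suc r)" using xs Suc assms(5) by auto
  qed
qed

lemma seqs_span:
  fixes A I :: "('a::field^'n) set"
  assumes "us \<in> seqs A I r" "vec.subspace A" "vec.subspace I" "I \<subseteq> A" "vec.dim A = vec.dim I + r"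
  shows "vec.span (I \<union> set us) = A"
proof (rule vec.subspace_dim_equal)
  show "vec.span (I \<union> set us) \<subseteq> A" using seqs_props[OF assms(1)] assms
    by (intro vec.span_minimal) auto
  show "vec.dim A \<le> vec.dim (vec.span (I \<union> set us))"
    using seqs_props[OF assms(1)] assms by (simp add: vec.dim_span)
qed (use assms in auto)

lemma count_Sub:
  fixes U Z I :: "('a::{field,finite}^'n) set"
  assumes U: "vec.subspace U" and Z: "vec.subspace Z" and I: "vec.subspace I"
    and IZ: "I \<subseteq> Z" and ZU: "Z \<subseteq> U" and r: "vec.dim Z + r \<le> vec.dim U"
  shows "real (card (Sub U Z I (vec.dim I + r))) *
           (\<Prod>s<r. real CARD('a) ^ (vec.dim I + r) - real CARD('a) ^ (vec.dim I + s))
         \<le> (\<Prod>s<r. real CARD('a) ^ vec.dim U - real CARD('a) ^ (vec.dim Z + s))"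
proof -
  let ?S = "Sub U Z I (vec.dim I + r)"
  let ?P = "(\<Prod>s<r. real CARD('a) ^ (vec.dim I + r) - real CARD('a) ^ (vec.dim I + s))"
  have finS: "finite ?S" by (rule finite_subset[of _ "Pow UNIV"]) auto
  have cA: "real (card (seqs A I r)) = ?P" if A: "A \<in> ?S" for A
  proof -
    have "real (card (seqs A I r)) = (\<Prod>s<r. real CARD('a) ^ vec.dim A - real CARD('a) ^ (vec.dim I + s))"
      using A I unfolding Sub_def by (intro card_seqs) auto
    thus ?thesis using A unfolding Sub_def by simp
  qed
  have disj: "\<forall>A\<in>?S. \<forall>B\<in>?S. A \<noteq> B \<longrightarrow> seqs A I r \<inter> seqs B I r = {}"
  proof (intro ballI impI)
    fix A B assume A: "A \<in> ?S" and B: "B \<in> ?S" and ne: "A \<noteq> B"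
    show "seqs A I r \<inter> seqs B I r = {}"
    proof (rule ccontr)
      assume "seqs A I r \<inter> seqs B I r \<noteq> {}"
      then obtain us where "us \<in> seqs A I r" "us \<in> seqs B I r" by blast
      have "vec.span (I \<union> set us) = A"
        using A I \<open>us \<in> seqs A I r\<close> unfolding Sub_def by (intro seqs_span) auto
      moreover have "vec.span (I \<union> set us) = B"
        using B I \<open>us \<in> seqs B I r\<close> unfolding Sub_def by (intro seqs_span) auto
      ultimately show False using ne by simp
    qed
  qed
  have "real (card ?S) * ?P = (\<Sum>A\<in>?S. real (card (seqs A I r)))"
    using cA by simp
  also have "\<dots> = real (\<Sum>A\<in>?S. card (seqs A I r))" by simp
  also have "(\<Sum>A\<in>?S. card (seqs A I r)) = card (\<Union>A\<in>?S. seqs A I r)"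
    by (rule card_UN_disjoint[OF finS _ disj, symmetric]) (simp add: finite_seqs)
  also have "\<dots> \<le> real (card (seqs U Z r))"
  proof -
    have "(\<Union>A\<in>?S. seqs A I r) \<subseteq> seqs U Z r"
      using seqs_mono[OF _ I Z] unfolding Sub_def by blast
    thus ?thesis by (simp add: card_mono finite_seqs)
  qed
  also have "\<dots> = (\<Prod>s<r. real CARD('a) ^ vec.dim U - real CARD('a) ^ (vec.dim Z + s))"
    using card_seqs[OF U Z ZU r] .
  finally show ?thesis .
qed

lemma ratio_factor:
  fixes Q :: real
  assumes Q: "Q > 1" and s: "s < r" and az: "a \<le> z" and m: "z + r \<le> m"
  shows "(Q ^ m - Q ^ (z + s)) / (Q ^ (a + r) - Q ^ (a + s))
         = Q ^ (z - a) * ((Q ^ (m - s - z) - 1) / (Q ^ (r - s) - 1))"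
proof -
  define A where "A = Q ^ (z - a)"
  define B where "B = Q ^ (a + s)"
  define C where "C = Q ^ (m - s - z)"
  define D where "D = Q ^ (r - s)"
  have e1: "Q ^ m = A * B * C" unfolding A_def B_def C_def
    using s m az by (simp flip: power_add)
  have e2: "Q ^ (z + s) = A * B" unfolding A_def B_def
    using az by (simp flip: power_add)
  have e3: "Q ^ (a + r) = B * D" unfolding B_def D_def
    using s by (simp flip: power_add)
  have p1: "D > 1" unfolding D_def using Q s by (intro one_less_power) auto
  have p2: "B > 0" unfolding B_def using Q by simp
  have "(A * B * C - A * B) / (B * D - B) = A * ((C - 1) / (D - 1))"
  proof -
    have "A * B * C - A * B = B * (A * (C - 1))" by (simp add: algebra_simps)
    moreover have "B * D - B = B * (D - 1)" by (simp add: algebra_simps)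
    ultimately show ?thesis using p1 p2 by simp
  qed
  thus ?thesis unfolding e1 e2 e3 B_def[symmetric] A_def[symmetric] C_def[symmetric] D_def[symmetric] .
qed

lemma gauss_binom_pos:
  assumes "q \<ge> 2" "r \<le> m"
  shows "gauss_binom q m r > 0"
  unfolding gauss_binom_def
proof (rule prod_pos)
  fix s assume "s \<in> {..<r}"
  hence "1 < real q ^ (m - s)" "1 < real q ^ (r - s)" using assms by (auto intro!: one_less_power)
  thus "0 < (real q ^ (m - s) - 1) / (real q ^ (r - s) - 1)" by simp
qed

lemma count_Sub_gb:
  fixes U Z I :: "('a::{field,finite}^'n) set"
  assumes U: "vec.subspace U" and Z: "vec.subspace Z" and I: "vec.subspace I"
    and IZ: "I \<subseteq> Z" and ZU: "Z \<subseteq> U" and r: "vec.dim Z + r \<le> vec.dim U"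
  shows "real (card (Sub U Z I (vec.dim I + r)))
         \<le> real CARD('a) ^ ((vec.dim Z - vec.dim I) * r) * gauss_binom CARD('a) (vec.dim U - vec.dim Z) r"
proof -
  define Q where "Q = real CARD('a)"
  have Q: "Q > 1" using card_field_ge2[where 'a='a] unfolding Q_def by simp
  have az: "vec.dim I \<le> vec.dim Z" using IZ by (rule vec.dim_subset)
  let ?P1 = "(\<Prod>s<r. Q ^ vec.dim U - Q ^ (vec.dim Z + s))"
  let ?P2 = "(\<Prod>s<r. Q ^ (vec.dim I + r) - Q ^ (vec.dim I + s))"
  have P2: "?P2 > 0"
  proof (rule prod_pos)
    fix s assume "s \<in> {..<r}"
    hence "Q ^ (vec.dim I + s) < Q ^ (vec.dim I + r)" using Q by (intro power_strict_increasing) auto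
    thus "0 < Q ^ (vec.dim I + r) - Q ^ (vec.dim I + s)" by simp
  qed
  have "real (card (Sub U Z I (vec.dim I + r))) * ?P2 \<le> ?P1"
    using count_Sub[OF U Z I IZ ZU r] unfolding Q_def .
  hence "real (card (Sub U Z I (vec.dim I + r))) \<le> ?P1 / ?P2"
    using P2 by (simp add: field_simps)
  also have "?P1 / ?P2 = (\<Prod>s<r. (Q ^ vec.dim U - Q ^ (vec.dim Z + s)) / (Q ^ (vec.dim I + r) - Q ^ (vec.dim I + s)))"
    by (rule prod_dividef[symmetric])
  also have "\<dots> = (\<Prod>s<r. Q ^ (vec.dim Z - vec.dim I) * ((Q ^ (vec.dim U - vec.dim Z - s) - 1) / (Q ^ (r - s) - 1)))"
  proof (rule prod.cong[OF refl])
    fix s assume "s \<in> {..<r}"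
    hence "(Q ^ vec.dim U - Q ^ (vec.dim Z + s)) / (Q ^ (vec.dim I + r) - Q ^ (vec.dim I + s))
         = Q ^ (vec.dim Z - vec.dim I) * ((Q ^ (vec.dim U - s - vec.dim Z) - 1) / (Q ^ (r - s) - 1))"
      using ratio_factor[OF Q _ az r] by auto
    moreover have "vec.dim U - s - vec.dim Z = vec.dim U - vec.dim Z - s" by simp
    ultimately show "(Q ^ vec.dim U - Q ^ (vec.dim Z + s)) / (Q ^ (vec.dim I + r) - Q ^ (vec.dim I + s))
         = Q ^ (vec.dim Z - vec.dim I) * ((Q ^ (vec.dim U - vec.dim Z - s) - 1) / (Q ^ (r - s) - 1))"
      by simp
  qed
  also have "\<dots> = Q ^ ((vec.dim Z - vec.dim I) * r) * gauss_binom CARD('a) (vec.dim U - vec.dim Z) r"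
    unfolding gauss_binom_def prod.distrib Q_def by (simp add: power_mult)
  finally show ?thesis unfolding Q_def .
qed

lemma seqs_nonempty:
  fixes U Z :: "('a::{field,finite}^'n) set"
  assumes U: "vec.subspace U" and Z: "vec.subspace Z" "Z \<subseteq> U"
    and r: "vec.dim Z + r \<le> vec.dim U"
  shows "seqs U Z r \<noteq> {}"
proof -
  define Q where "Q = real CARD('a)"
  have Q: "Q > 1" using card_field_ge2[where 'a='a] unfolding Q_def by simp
  have "(\<Prod>s<r. Q ^ vec.dim U - Q ^ (vec.dim Z + s)) > 0"
  proof (rule prod_pos)
    fix s assume "s \<in> {..<r}"
    hence "Q ^ (vec.dim Z + s) < Q ^ vec.dim U" using Q r by (intro power_strict_increasing) auto
    thus "0 < Q ^ vec.dim U - Q ^ (vec.dim Z + s)" by simp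
  qed
  hence "real (card (seqs U Z r)) > 0" using card_seqs[OF U Z r] unfolding Q_def by simp
  thus ?thesis by auto
qed

lemma dim_span_Un_Int:
  fixes A B :: "('a::field^'n) set"
  assumes "vec.subspace A" "vec.subspace B"
  shows "vec.dim (vec.span (A \<union> B)) + vec.dim (A \<inter> B) = vec.dim A + vec.dim B"
proof -
  have "vec.span (A \<union> B) = {x + y |x y. x \<in> A \<and> y \<in> B}"
  proof -
    have "vec.span A = A" "vec.span B = B" using assms by (simp_all only: vec.span_eq_iff)
    thus ?thesis unfolding vec.span_Un by (simp only:)
  qed
  thus ?thesis using vec.dim_sums_Int[OF assms] by simp
qed

lemma exists_comp:
  fixes W Y :: "('a::{field,finite}^'n) set"
  assumes W: "vec.subspace W" and Y: "vec.subspace Y" and WY: "W \<subseteq> Y"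
    and d: "vec.dim W + d \<le> vec.dim Y"
  obtains D where "vec.subspace D" "D \<subseteq> Y" "D \<inter> W = {0}" "vec.dim D = d"
proof -
  obtain us where us: "us \<in> seqs Y W d" using seqs_nonempty[OF Y W WY d] by blast
  have p: "set us \<subseteq> Y" "length us = d" "vec.dim (W \<union> set us) = vec.dim W + d"
    using seqs_props[OF us] by auto
  define D where "D = vec.span (set us)"
  have sD: "vec.subspace D" unfolding D_def by simp
  have DY: "D \<subseteq> Y" unfolding D_def using p Y by (intro vec.span_minimal) auto
  have "vec.span (W \<union> D) = vec.span (W \<union> set us)"
    unfolding D_def vec.span_Un by (simp add: vec.span_span)
  hence "vec.dim (vec.span (W \<union> D)) = vec.dim W + d" using p by (simp add: vec.dim_span)
  hence e: "vec.dim W + d + vec.dim (W \<inter> D) = vec.dim W + vec.dim D"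
    using dim_span_Un_Int[OF W sD] by simp
  have "vec.dim D \<le> card (set us)" unfolding D_def
    by (rule vec.dim_le_card) (auto simp: vec.span_superset)
  also have "\<dots> \<le> d" using p(2) card_length by metis
  finally have "vec.dim D \<le> d" .
  hence "vec.dim D = d" "vec.dim (W \<inter> D) = 0" using e by (simp_all del: vec.dim_eq_0)
  hence "W \<inter> D \<subseteq> {0}" by simp
  hence "D \<inter> W \<subseteq> {0}" by blast
  moreover have "0 \<in> D \<inter> W" using sD W by (simp add: vec.subspace_0)
  ultimately have "D \<inter> W = {0}" by blast
  thus ?thesis using that sD DY \<open>vec.dim D = d\<close> by blast
qed

lemma exists_between:
  fixes I Y :: "('a::{field,finite}^'n) set"
  assumes I: "vec.subspace I" and Y: "vec.subspace Y" and IY: "I \<subseteq> Y"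
    and d: "vec.dim I \<le> d" "d \<le> vec.dim Y"
  obtains A where "vec.subspace A" "I \<subseteq> A" "A \<subseteq> Y" "vec.dim A = d"
proof -
  obtain us where us: "us \<in> seqs Y I (d - vec.dim I)" using seqs_nonempty[OF Y I IY, of "d - vec.dim I"] d by auto
  have p: "set us \<subseteq> Y" "vec.dim (I \<union> set us) = vec.dim I + (d - vec.dim I)"
    using seqs_props[OF us] by auto
  define A where "A = vec.span (I \<union> set us)"
  have "vec.subspace A" unfolding A_def by simp
  moreover have "I \<subseteq> A" unfolding A_def using vec.span_superset by blast
  moreover have "A \<subseteq> Y" unfolding A_def using p Y IY by (intro vec.span_minimal) auto
  moreover have "vec.dim A = d" unfolding A_def using p d by (simp add: vec.dim_span)
  ultimately show ?thesis using that by blast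
qed

lemma dim_UNIV_cart: "vec.dim (UNIV :: ('a::field^'n) set) = CARD('n)"
  by (simp add: card_cart_basis)

lemma gauss_binom_nonneg:
  assumes "q \<ge> 2" "r \<le> m"
  shows "gauss_binom q m r \<ge> 0"
  using gauss_binom_pos[OF assms] by simp

lemma tau_le_cover:
  assumes "is_t_cover t F W"
  shows "tau t F \<le> vec.dim W"
  unfolding tau_def using assms by (intro Least_le) blast

lemma rec_bound:
  fixes FF :: "('a::{field,finite}^'n) set set"
  assumes Fk: "FF \<subseteq> subspaces_dim k" and alm: "almost_t_intersecting t FF"
    and tk: "t \<le> k" "0 < t" and tauk: "tau t FF \<le> k" and kn: "k \<le> CARD('n)"
  shows "vec.subspace S \<Longrightarrow> vec.dim S + d = tau t FF \<Longrightarrow>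
     real (card {F\<in>FF. S \<subseteq> F}) \<le>
       gauss_binom CARD('a) (k - t + 1) 1 ^ d * gauss_binom CARD('a) (CARD('n) - tau t FF) (k - tau t FF)
       + (\<Sum>m<d. gauss_binom CARD('a) (k - t + 1) 1 ^ m)"
proof (induction d arbitrary: S)
  case 0
  let ?q = "CARD('a)"
  have sub: "{F\<in>FF. S \<subseteq> F} \<subseteq> Sub UNIV S S (vec.dim S + (k - tau t FF))"
    using Fk 0 tauk unfolding Sub_def subspaces_dim_def by auto
  have "real (card {F\<in>FF. S \<subseteq> F}) \<le> real (card (Sub UNIV S S (vec.dim S + (k - tau t FF))))"
    using sub by (intro of_nat_mono card_mono) (auto intro: finite_subset[of _ "Pow UNIV"])
  also have "\<dots> \<le> real ?q ^ ((vec.dim S - vec.dim S) * (k - tau t FF)) *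
        gauss_binom ?q (vec.dim (UNIV :: ('a^'n) set) - vec.dim S) (k - tau t FF)"
    using 0 tauk kn by (intro count_Sub_gb) (auto simp: dim_UNIV_cart card_cart_basis)
  finally show ?case using 0 by (simp add: dim_UNIV_cart card_cart_basis)
next
  case (Suc d)
  let ?q = "CARD('a)"
  let ?c = "gauss_binom ?q (k - t + 1) 1"
  let ?G = "gauss_binom ?q (CARD('n) - tau t FF) (k - tau t FF)"
  let ?R = "\<lambda>d. ?c ^ d * ?G + (\<Sum>m<d. ?c ^ m)"
  have q2: "?q \<ge> 2" by (rule card_field_ge2)
  have c0: "?c \<ge> 0" using q2 by (intro gauss_binom_nonneg) auto
  have G0: "?G \<ge> 0" using q2 tauk kn by (intro gauss_binom_nonneg) auto
  have R0: "?R d \<ge> 0" using c0 G0 by (intro add_nonneg_nonneg mult_nonneg_nonneg sum_nonneg) auto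
  have FFs: "vec.subspace F \<and> vec.dim F = k" if "F \<in> FF" for F
    using that Fk unfolding subspaces_dim_def by auto
  have "\<not> is_t_cover t FF S"
    using tau_le_cover[of t FF S] Suc.prems by auto
  then obtain F' where F': "F' \<in> FF" "vec.dim (S \<inter> F') < t"
    using Suc.prems(1) unfolding is_t_cover_def by auto
  define W where "W = S \<inter> F'"
  have sF': "vec.subspace F'" "vec.dim F' = k" using FFs[OF F'(1)] by auto
  have sW: "vec.subspace W" unfolding W_def using Suc.prems(1) sF'(1) by (rule vec.subspace_inter)
  obtain D where D: "vec.subspace D" "D \<subseteq> F'" "D \<inter> W = {0}" "vec.dim D = k - t + 1"
  proof -
    have WF: "W \<subseteq> F'" unfolding W_def by blast
    have "vec.dim W + (k - t + 1) \<le> vec.dim F'" using F'(2) tk sF'(2) unfolding W_def by linarith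
    thus ?thesis using exists_comp[OF sW sF'(1) WF] that by blast
  qed
  define Ls where "Ls = Sub D {0} {0} 1"
  have cLs: "real (card Ls) \<le> ?c"
  proof -
    have "real (card (Sub D {0} {0} (vec.dim ({0}::('a^'n) set) + 1)))
      \<le> real ?q ^ ((vec.dim ({0}::('a^'n) set) - vec.dim ({0}::('a^'n) set)) * 1) *
          gauss_binom ?q (vec.dim D - vec.dim ({0}::('a^'n) set)) 1"
      using D tk by (intro count_Sub_gb) (auto simp: vec.subspace_0)
    thus ?thesis unfolding Ls_def using D by simp
  qed
  define SL where "SL = (\<lambda>L. vec.span (S \<union> L))"
  have SLb: "real (card {F\<in>FF. SL L \<subseteq> F}) \<le> ?R d" if L: "L \<in> Ls" for L
  proof -
    have sL: "vec.subspace L" "L \<subseteq> D" "vec.dim L = 1" using L unfolding Ls_def Sub_def by auto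
    have "S \<inter> L \<subseteq> {0}" using D(2,3) sL(2) unfolding W_def by blast
    hence "vec.dim (S \<inter> L) = 0" by simp
    hence "vec.dim (SL L) = vec.dim S + 1"
      using dim_span_Un_Int[OF Suc.prems(1) sL(1)] sL(3) unfolding SL_def by (simp del: vec.dim_eq_0)
    hence "vec.dim (SL L) + d = tau t FF" using Suc.prems(2) by simp
    thus ?thesis using Suc.IH[of "SL L"] unfolding SL_def by simp
  qed
  define Good where "Good = {F\<in>FF. S \<subseteq> F \<and> t \<le> vec.dim (F' \<inter> F)}"
  define Bad where "Bad = {F\<in>FF. vec.dim (F' \<inter> F) < t}"
  have finLs: "finite Ls" unfolding Ls_def by (rule finite_subset[of _ "Pow UNIV"]) auto
  have GoodSub: "Good \<subseteq> (\<Union>L\<in>Ls. {F\<in>FF. SL L \<subseteq> F})"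
  proof
    fix F assume "F \<in> Good"
    hence F: "F \<in> FF" "S \<subseteq> F" "t \<le> vec.dim (F' \<inter> F)" unfolding Good_def by auto
    have sF: "vec.subspace F" "vec.dim F = k" using FFs[OF F(1)] by auto
    define X where "X = F \<inter> F'"
    have sX: "vec.subspace X" unfolding X_def using sF(1) sF'(1) by (rule vec.subspace_inter)
    have e: "vec.dim (vec.span (X \<union> D)) + vec.dim (X \<inter> D) = vec.dim X + vec.dim D"
      by (rule dim_span_Un_Int[OF sX D(1)])
    have "vec.span (X \<union> D) \<subseteq> F'" using D(2) sF'(1) unfolding X_def by (intro vec.span_minimal) auto
    hence "vec.dim (vec.span (X \<union> D)) \<le> k" using vec.dim_subset sF'(2) by metis
    moreover have "vec.dim X \<ge> t" using F(3) unfolding X_def by (simp add: inf_commute)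
    ultimately have "vec.dim (X \<inter> D) \<noteq> 0" using e D(4) tk by linarith
    hence "\<not> (X \<inter> D \<subseteq> {0})" by simp
    then obtain v where v: "v \<in> X \<inter> D" "v \<noteq> 0" by blast
    define L where "L = vec.span {v}"
    have vD: "v \<in> D" and vF: "v \<in> F" using v unfolding X_def by auto
    have LD: "L \<subseteq> D" unfolding L_def using vD D(1) by (intro vec.span_minimal) auto
    have LF: "L \<subseteq> F" unfolding L_def using vF sF(1) by (intro vec.span_minimal) auto
    have L0: "0 \<in> L" unfolding L_def by (rule vec.span_zero)
    have dL: "vec.dim L = 1" unfolding L_def using v(2) by (simp only: vec.dim_span vec.dim_singleton) simp
    have sL: "vec.subspace L" unfolding L_def by (rule vec.subspace_span)
    have "L \<inter> {0} = {0}" using L0 by blast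
    hence "L \<in> Ls" unfolding Ls_def Sub_def using LD L0 dL sL by blast
    moreover have "SL L \<subseteq> F" unfolding SL_def
      using F(2) LF sF(1) by (intro vec.span_minimal) auto
    ultimately show "F \<in> (\<Union>L\<in>Ls. {F\<in>FF. SL L \<subseteq> F})" using F(1) by blast
  qed
  have "{F\<in>FF. S \<subseteq> F} \<subseteq> Good \<union> Bad" unfolding Good_def Bad_def by auto
  hence "card {F\<in>FF. S \<subseteq> F} \<le> card (Good \<union> Bad)"
    by (intro card_mono) (auto intro: finite_subset[of _ "Pow UNIV"])
  also have "\<dots> \<le> card Good + card Bad" by (rule card_Un_le)
  finally have c1: "real (card {F\<in>FF. S \<subseteq> F}) \<le> real (card Good) + real (card Bad)" by linarith
  have "card Bad \<le> 1" using bspec[OF alm[unfolded almost_t_intersecting_def] F'(1)] unfolding Bad_def .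
  hence c2: "real (card Bad) \<le> 1" by simp
  have "card Good \<le> card (\<Union>L\<in>Ls. {F\<in>FF. SL L \<subseteq> F})"
    using GoodSub by (intro card_mono) (auto intro: finite_subset[of _ "Pow UNIV"])
  also have "\<dots> \<le> (\<Sum>L\<in>Ls. card {F\<in>FF. SL L \<subseteq> F})" by (rule card_UN_le[OF finLs])
  finally have "real (card Good) \<le> real (\<Sum>L\<in>Ls. card {F\<in>FF. SL L \<subseteq> F})"
    by (rule of_nat_mono)
  also have "\<dots> = (\<Sum>L\<in>Ls. real (card {F\<in>FF. SL L \<subseteq> F}))" by (rule of_nat_sum)
  also have "\<dots> \<le> (\<Sum>L\<in>Ls. ?R d)" using SLb by (intro sum_mono) auto
  also have "\<dots> = real (card Ls) * ?R d" by simp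
  also have "\<dots> \<le> ?c * ?R d" using cLs R0 by (intro mult_right_mono) auto
  finally have c3: "real (card Good) \<le> ?c * ?R d" .
  have "?c * ?R d + 1 = ?R (Suc d)"
  proof -
    have "(\<Sum>m<Suc d. ?c ^ m) = 1 + (\<Sum>m<d. ?c ^ Suc m)" by (subst sum.lessThan_Suc_shift) simp
    also have "(\<Sum>m<d. ?c ^ Suc m) = ?c * (\<Sum>m<d. ?c ^ m)" by (simp add: sum_distrib_left)
    finally have "(\<Sum>m<Suc d. ?c ^ m) = 1 + ?c * (\<Sum>m<d. ?c ^ m)" .
    thus ?thesis by (simp add: distrib_left)
  qed
  thus ?case using c1 c2 c3 by linarith
qed

theorem lemma6p1:
  fixes \<F> :: "('a::{field,finite} ^ 'n) set set"
    and X1 X2 :: "('a ^ 'n) set"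
    and n k t l i j :: nat
  defines "q \<equiv> CARD('a)"
  assumes "n = CARD('n)"
    and "0 < n" "0 < k" "0 < t" "0 < l" "0 < i" "0 < j"
    and "i \<le> min t j" "2 * t - i \<le> k" "t + j - i \<le> l" "n \<ge> 2 * k"
    and "\<F> \<subseteq> subspaces_dim k"
    and "almost_t_intersecting t \<F>"
    and "2 * t - i \<le> tau t \<F>" "tau t \<F> \<le> k"
    and "X1 \<in> subspaces_dim l" "X2 \<in> subspaces_dim l"
    and "vec.dim (X1 \<inter> X2) = j"
  shows "real (card (restr_family \<F> X1 X2 t i)) /
           (real q ^ (2 * (j - i) * (t - i)) * gauss_binom q j i * (gauss_binom q (l - j) (t - i))\<^sup>2)
         \<le> gauss_binom q (k - t + 1) 1 ^ (tau t \<F> + i - 2 * t) * gauss_binom q (n - tau t \<F>) (k - tau t \<F>)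
           + (\<Sum>m<tau t \<F> + i - 2 * t. gauss_binom q (k - t + 1) 1 ^ m)"
proof -
  note a = assms(2-)
  define \<tau> where "\<tau> = tau t \<F>"
  define d where "d = \<tau> + i - 2 * t"
  define R where "R = gauss_binom q (k - t + 1) 1 ^ d * gauss_binom q (n - \<tau>) (k - \<tau>)
           + (\<Sum>m<d. gauss_binom q (k - t + 1) 1 ^ m)"
  define \<alpha> where "\<alpha> = real q ^ ((j - i) * (t - i)) * gauss_binom q (l - j) (t - i)"
  define Den where "Den = real q ^ (2 * (j - i) * (t - i)) * gauss_binom q j i * (gauss_binom q (l - j) (t - i))\<^sup>2"
  have q2: "q \<ge> 2" unfolding q_def by (rule card_field_ge2)
  have it: "i \<le> t" "i \<le> j" using a by auto
  have tk: "t \<le> k" using a by linarith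
  have kn: "k \<le> CARD('n)" using a by linarith
  have sX1: "vec.subspace X1" "vec.dim X1 = l" using a unfolding subspaces_dim_def by auto
  have sX2: "vec.subspace X2" "vec.dim X2 = l" using a unfolding subspaces_dim_def by auto
  define X12 where "X12 = X1 \<inter> X2"
  have sX12: "vec.subspace X12" "vec.dim X12 = j" unfolding X12_def
    using vec.subspace_inter[OF sX1(1) sX2(1)] a by auto
  have FFs: "vec.subspace F \<and> vec.dim F = k" if "F \<in> \<F>" for F
    using that a unfolding subspaces_dim_def by auto
  define Is where "Is = Sub X12 {0} {0} i"
  define AS where "AS = (\<lambda>I. Sub X1 X12 I t)"
  define BS where "BS = (\<lambda>I. Sub X2 X12 I t)"
  have fin: "finite (S :: ('a^'n) set set)" for S by (rule finite_subset[of _ "Pow UNIV"]) auto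
  have cIs: "real (card Is) \<le> gauss_binom q j i"
  proof -
    have "real (card (Sub X12 {0} {0} (vec.dim ({0}::('a^'n) set) + i)))
      \<le> real CARD('a) ^ ((vec.dim ({0}::('a^'n) set) - vec.dim ({0}::('a^'n) set)) * i) *
          gauss_binom CARD('a) (vec.dim X12 - vec.dim ({0}::('a^'n) set)) i"
      using sX12 it by (intro count_Sub_gb) (auto simp: vec.subspace_0)
    thus ?thesis unfolding Is_def q_def using sX12 by simp
  qed
  have cAS: "real (card (Sub X X12 I t)) \<le> \<alpha>"
    if I: "I \<in> Is" and X: "vec.subspace X" "vec.dim X = l" "X12 \<subseteq> X" for I X
  proof -
    have sI: "vec.subspace I" "vec.dim I = i" "I \<subseteq> X12" using I unfolding Is_def Sub_def by auto
    have "real (card (Sub X X12 I (vec.dim I + (t - i))))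
       \<le> real CARD('a) ^ ((vec.dim X12 - vec.dim I) * (t - i)) * gauss_binom CARD('a) (vec.dim X - vec.dim X12) (t - i)"
      using X sX12 sI a it by (intro count_Sub_gb) auto
    thus ?thesis unfolding \<alpha>_def q_def using sI sX12 X it by simp
  qed
  have al0: "\<alpha> \<ge> 0" unfolding \<alpha>_def using q2 a it
    by (intro mult_nonneg_nonneg gauss_binom_nonneg) auto
  have X12sub: "X12 \<subseteq> X1" "X12 \<subseteq> X2" unfolding X12_def by auto
  define Sig where "Sig = (SIGMA I:Is. AS I \<times> BS I)"
  define Ms where "Ms = (\<lambda>(I,A,B). vec.span (A \<union> B)) ` Sig"
  have DenEq: "Den = gauss_binom q j i * \<alpha>\<^sup>2"
  proof -
    have "real q ^ (2 * (j - i) * (t - i)) = (real q ^ ((j - i) * (t - i)))\<^sup>2"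
      by (simp add: power_mult[symmetric] mult.commute mult.left_commute)
    thus ?thesis unfolding Den_def \<alpha>_def by (simp add: power_mult_distrib)
  qed
  have cMs: "real (card Ms) \<le> Den"
  proof -
    have "card Ms \<le> card Sig" unfolding Ms_def by (rule card_image_le) (simp add: Sig_def fin)
    hence "real (card Ms) \<le> real (card Sig)" by simp
    also have "card Sig = (\<Sum>I\<in>Is. card (AS I) * card (BS I))"
      unfolding Sig_def by (simp add: fin card_cartesian_product)
    also have "real (\<Sum>I\<in>Is. card (AS I) * card (BS I)) = (\<Sum>I\<in>Is. real (card (AS I)) * real (card (BS I)))"
      by simp
    also have "\<dots> \<le> (\<Sum>I\<in>Is. \<alpha> * \<alpha>)"
    proof (rule sum_mono)
      fix I assume I: "I \<in> Is"
      show "real (card (AS I)) * real (card (BS I)) \<le> \<alpha> * \<alpha>"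
        unfolding AS_def BS_def using cAS[OF I sX1 X12sub(1)] cAS[OF I sX2 X12sub(2)]
        by (intro mult_mono) auto
    qed
    also have "\<dots> = real (card Is) * \<alpha>\<^sup>2" by (simp add: power2_eq_square)
    also have "\<dots> \<le> gauss_binom q j i * \<alpha>\<^sup>2" using cIs by (intro mult_right_mono) auto
    finally show ?thesis unfolding DenEq .
  qed
  have dimM: "vec.subspace M \<and> vec.dim M + d = \<tau>" if M: "M \<in> Ms" for M
  proof -
    obtain I A B where IAB: "I \<in> Is" "A \<in> AS I" "B \<in> BS I" "M = vec.span (A \<union> B)"
      using M unfolding Ms_def Sig_def by auto
    have A: "vec.subspace A" "I \<subseteq> A" "A \<subseteq> X1" "A \<inter> X12 = I" "vec.dim A = t"
      using IAB(2) unfolding AS_def Sub_def by auto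
    have B: "vec.subspace B" "I \<subseteq> B" "B \<subseteq> X2" "B \<inter> X12 = I" "vec.dim B = t"
      using IAB(3) unfolding BS_def Sub_def by auto
    have dI: "vec.dim I = i" using IAB(1) unfolding Is_def Sub_def by auto
    have "A \<inter> B = I" using A B unfolding X12_def by blast
    hence "vec.dim M + i = t + t" using dim_span_Un_Int[OF A(1) B(1)] A B dI IAB(4) by simp
    moreover have "2 * t - i \<le> \<tau>" using a unfolding \<tau>_def by simp
    ultimately show ?thesis using IAB(4) it unfolding d_def by simp
  qed
  have cover: "restr_family \<F> X1 X2 t i \<subseteq> (\<Union>M\<in>Ms. {F\<in>\<F>. M \<subseteq> F})"
  proof
    fix F assume "F \<in> restr_family \<F> X1 X2 t i"
    hence F: "F \<in> \<F>" "t \<le> vec.dim (F \<inter> X1)" "t \<le> vec.dim (F \<inter> X2)" "vec.dim (F \<inter> X1 \<inter> X2) = i"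
      unfolding restr_family_def by auto
    have sF: "vec.subspace F" using FFs[OF F(1)] by simp
    define I where "I = F \<inter> X12"
    have sI: "vec.subspace I" unfolding I_def using sF sX12(1) by (rule vec.subspace_inter)
    have dI: "vec.dim I = i" using F(4) unfolding I_def X12_def by (simp add: Int_assoc)
    have I0: "0 \<in> I" using sI by (rule vec.subspace_0)
    have "I \<in> Is" unfolding Is_def Sub_def using sI dI I0 unfolding I_def by auto
    have sFX1: "vec.subspace (F \<inter> X1)" using sF sX1(1) by (rule vec.subspace_inter)
    have sFX2: "vec.subspace (F \<inter> X2)" using sF sX2(1) by (rule vec.subspace_inter)
    obtain A where A: "vec.subspace A" "I \<subseteq> A" "A \<subseteq> F \<inter> X1" "vec.dim A = t"
      using exists_between[OF sI sFX1, of t] dI it F(2) unfolding I_def X12_def by auto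
    obtain B where B: "vec.subspace B" "I \<subseteq> B" "B \<subseteq> F \<inter> X2" "vec.dim B = t"
      using exists_between[OF sI sFX2, of t] dI it F(3) unfolding I_def X12_def by auto
    have "A \<in> AS I" unfolding AS_def Sub_def using A unfolding I_def X12_def by auto
    moreover have "B \<in> BS I" unfolding BS_def Sub_def using B unfolding I_def X12_def by auto
    ultimately have "vec.span (A \<union> B) \<in> Ms" unfolding Ms_def Sig_def using \<open>I \<in> Is\<close>
      by (intro image_eqI[of _ _ "(I, A, B)"]) auto
    moreover have "vec.span (A \<union> B) \<subseteq> F" using A B sF by (intro vec.span_minimal) auto
    ultimately show "F \<in> (\<Union>M\<in>Ms. {F\<in>\<F>. M \<subseteq> F})" using F(1) by blast
  qed
  have R0: "R \<ge> 0" unfolding R_def using q2 a tk unfolding \<tau>_def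
    by (intro add_nonneg_nonneg mult_nonneg_nonneg sum_nonneg zero_le_power gauss_binom_nonneg) auto
  have RM: "real (card {F\<in>\<F>. M \<subseteq> F}) \<le> R" if M: "M \<in> Ms" for M
    using rec_bound[of \<F> k t, OF a(12) a(13) tk _ _ kn] dimM[OF M] a
    unfolding R_def q_def \<tau>_def by auto
  have "card (restr_family \<F> X1 X2 t i) \<le> card (\<Union>M\<in>Ms. {F\<in>\<F>. M \<subseteq> F})"
    using cover by (intro card_mono) (auto intro: fin)
  also have "\<dots> \<le> (\<Sum>M\<in>Ms. card {F\<in>\<F>. M \<subseteq> F})" by (rule card_UN_le[OF fin])
  finally have "real (card (restr_family \<F> X1 X2 t i)) \<le> real (\<Sum>M\<in>Ms. card {F\<in>\<F>. M \<subseteq> F})"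
    by (rule of_nat_mono)
  also have "\<dots> = (\<Sum>M\<in>Ms. real (card {F\<in>\<F>. M \<subseteq> F}))" by (rule of_nat_sum)
  also have "\<dots> \<le> (\<Sum>M\<in>Ms. R)" using RM by (intro sum_mono) auto
  also have "\<dots> = real (card Ms) * R" by simp
  also have "\<dots> \<le> Den * R" using cMs R0 by (intro mult_right_mono) auto
  finally have main: "real (card (restr_family \<F> X1 X2 t i)) \<le> Den * R" .
  have Den0: "Den > 0" unfolding Den_def using q2 a it
    by (intro mult_pos_pos zero_less_power gauss_binom_pos) auto
  have "real (card (restr_family \<F> X1 X2 t i)) / Den \<le> R"
    using main Den0 by (simp add: divide_le_eq mult.commute)
  thus ?thesis unfolding Den_def R_def d_def \<tau>_def .
qed

end
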